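(* Let $(X,d)$ be a complete metric space, let $N\in\mathbb{N}\setminus\{0\}$, let $\alpha:X\times X\rightarrow[0,+\infty)$ be $N$--transitive, and let $T:X\rightarrow X$ be an $\alpha$--contractive mapping of Meir--Keeler type such that $T$ is $\alpha$--admissible, there exists $x_{0}\in X$ with $\alpha(x_{0},Tx_{0})\geq1$, and at least one of the following holds: (i) $T$ is $\alpha$--orbitally continuous; (ii) $(X,d)$ is $(T,\alpha)$--regular. Assume moreover that $X$ is $\alpha$--connected. Then $T$ has a unique fixed point $x^{\ast}$, and $T^{n}x\rightarrow x^{\ast}$ as $n\rightarrow\infty$ for every $x\in X$.
   Context: $\mathbb{N}$ is the set of non-negative integers; $T^n$ is the $n$-th iterate of $T$. $T$ is an $\alpha$--contractive mapping of Meir--Keeler type if for every $\varepsilon>0$ there exists $\delta(\varepsilon)>0$ such that for all $x,y\in X$: $\varepsilon\leq d(x,y)<\varepsilon+\delta(\varepsilon)$ implies $\alpha(x,y)d(Tx,Ty)<\varepsilon$. $T$ is $\alpha$--admissible if $\alpha(x,y)\geq1$ implies $\alpha(Tx,Ty)\geq1$. $\alpha$ is $N$--transitive if for all $x_0,\dots,x_{N+1}\in X$ with $\alpha(x_i,x_{i+1})\geq1$ for all $i\in\{0,\dots,N\}$ one has $\alpha(x_0,x_{N+1})\geq1$. A sequence $\{x_n\}$ is $(T,\alpha)$--orbital if $x_n=T^nx_0$ and $\alpha(x_n,x_{n+1})\geq1$ for all $n$. $T$ is $\alpha$--orbitally continuous if for every $(T,\alpha)$--orbital sequence $\{x_n\}$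 with $x_n\rightarrow x$ there is a subsequence with $Tx_{n(k)}\rightarrow Tx$. $(X,d)$ is $(T,\alpha)$--regular if for every $(T,\alpha)$--orbital sequence $\{x_n\}$ with $x_n\rightarrow x$ there is a subsequence with $\alpha(x_{n(k)},x)\geq1$ for all $k$. An $\alpha$--chain from $x$ to $y$ is a tuple $(z_0,\dots,z_n)$ with $z_0=x$, $z_n=y$ and, for each $i\in\{1,\dots,n\}$, $\alpha(z_{i-1},z_i)\geq1$ or $\alpha(z_i,z_{i-1})\geq1$. $X$ is $\alpha$--connected if for all $x\neq y$ in $X$ there exists an $\alpha$--chain from $x$ to $y$. *)

theory Defs
  imports "HOL-Analysis.Analysis"
begin

definition alpha_MK_contractive :: "('a::metric_space \<Rightarrow> 'a \<Rightarrow> real) \<Rightarrow> ('a \<Rightarrow> 'a) \<Rightarrow> bool" where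
  "alpha_MK_contractive \<alpha> T \<longleftrightarrow>
     (\<forall>\<epsilon>>0. \<exists>\<delta>>0. \<forall>x y. \<epsilon> \<le> dist x y \<and> dist x y < \<epsilon> + \<delta> \<longrightarrow> \<alpha> x y * dist (T x) (T y) < \<epsilon>)"

definition alpha_admissible :: "('a \<Rightarrow> 'a \<Rightarrow> real) \<Rightarrow> ('a \<Rightarrow> 'a) \<Rightarrow> bool" where
  "alpha_admissible \<alpha> T \<longleftrightarrow> (\<forall>x y. \<alpha> x y \<ge> 1 \<longrightarrow> \<alpha> (T x) (T y) \<ge> 1)"

definition N_transitive :: "nat \<Rightarrow> ('a \<Rightarrow> 'a \<Rightarrow> real) \<Rightarrow> bool" where
  "N_transitive N \<alpha> \<longleftrightarrow>
     (\<forall>x :: nat \<Rightarrow> 'a. (\<forall>i\<le>N. \<alpha> (x i) (x (Suc i)) \<ge> 1) \<longrightarrow> \<alpha> (x 0) (x (Suc N)) \<ge> 1)"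

definition orbital :: "('a \<Rightarrow> 'a) \<Rightarrow> ('a \<Rightarrow> 'a \<Rightarrow> real) \<Rightarrow> (nat \<Rightarrow> 'a) \<Rightarrow> bool" where
  "orbital T \<alpha> x \<longleftrightarrow> (\<forall>n. x n = (T ^^ n) (x 0)) \<and> (\<forall>n. \<alpha> (x n) (x (Suc n)) \<ge> 1)"

definition alpha_orbitally_continuous :: "('a::topological_space \<Rightarrow> 'a) \<Rightarrow> ('a \<Rightarrow> 'a \<Rightarrow> real) \<Rightarrow> bool" where
  "alpha_orbitally_continuous T \<alpha> \<longleftrightarrow>
     (\<forall>x z. orbital T \<alpha> (x :: nat \<Rightarrow> 'a) \<and> x \<longlonglongrightarrow> z \<longrightarrow>
        (\<exists>r::nat \<Rightarrow> nat. strict_mono r \<and> (\<lambda>k. T (x (r k))) \<longlonglongrightarrow> T z))"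

definition Talpha_regular :: "('a::topological_space \<Rightarrow> 'a) \<Rightarrow> ('a \<Rightarrow> 'a \<Rightarrow> real) \<Rightarrow> bool" where
  "Talpha_regular T \<alpha> \<longleftrightarrow>
     (\<forall>x z. orbital T \<alpha> (x :: nat \<Rightarrow> 'a) \<and> x \<longlonglongrightarrow> z \<longrightarrow>
        (\<exists>r::nat \<Rightarrow> nat. strict_mono r \<and> (\<forall>k. \<alpha> (x (r k)) z \<ge> 1)))"

text \<open>An alpha-chain from x to y: a tuple (z_0,...,z_n), encoded as a list of length n+1.\<close>
definition alpha_chain :: "('a \<Rightarrow> 'a \<Rightarrow> real) \<Rightarrow> 'a \<Rightarrow> 'a \<Rightarrow> 'a list \<Rightarrow> bool" where
  "alpha_chain \<alpha> x y zs \<longleftrightarrow> zs \<noteq> [] \<and> hd zs = x \<and> last zs = y \<and>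
     (\<forall>i. 1 \<le> i \<and> i < length zs \<longrightarrow> \<alpha> (zs ! (i - 1)) (zs ! i) \<ge> 1 \<or> \<alpha> (zs ! i) (zs ! (i - 1)) \<ge> 1)"

definition alpha_connected :: "('a \<Rightarrow> 'a \<Rightarrow> real) \<Rightarrow> bool" where
  "alpha_connected \<alpha> \<longleftrightarrow> (\<forall>x y. x \<noteq> y \<longrightarrow> (\<exists>zs. alpha_chain \<alpha> x y zs))"

end

theory Submission
  imports Defs
begin

lemma adm_iter:
  assumes "alpha_admissible \<alpha> T" "\<alpha> a b \<ge> 1"
  shows "\<alpha> ((T^^n) a) ((T^^n) b) \<ge> 1"
  using assms by (induction n) (auto simp: alpha_admissible_def)

lemma mk_lt:
  fixes c d e :: real
  assumes "c \<ge> 1" "c * d < e" "0 \<le> d"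
  shows "d < e"
proof -
  have "1 * d \<le> c * d" using assms by (intro mult_right_mono) auto
  thus ?thesis using assms(2) by simp
qed

lemma nonexp:
  assumes "alpha_MK_contractive \<alpha> T" "(\<alpha>::'a::metric_space \<Rightarrow> 'a \<Rightarrow> real) a b \<ge> 1"
  shows "dist (T a) (T b) \<le> dist a b"
proof (cases "a = b")
  case True thus ?thesis by simp
next
  case False
  hence "dist a b > 0" by simp
  then obtain \<delta> where "\<delta> > 0" and H: "\<forall>x y. dist a b \<le> dist x y \<and> dist x y < dist a b + \<delta> \<longrightarrow> \<alpha> x y * dist (T x) (T y) < dist a b"
    using assms(1) unfolding alpha_MK_contractive_def by blast
  hence "\<alpha> a b * dist (T a) (T b) < dist a b" by auto
  hence "dist (T a) (T b) < dist a b" using mk_lt[OF assms(2)] zero_le_dist by blast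
  thus ?thesis by simp
qed

lemma dist_iter_zero:
  assumes mk: "alpha_MK_contractive \<alpha> T" and ad: "alpha_admissible \<alpha> T"
    and ab: "(\<alpha>::'a::metric_space \<Rightarrow> 'a \<Rightarrow> real) a b \<ge> 1"
  shows "(\<lambda>n. dist ((T^^n) a) ((T^^n) b)) \<longlonglongrightarrow> 0"
proof -
  define D where "D n = dist ((T^^n) a) ((T^^n) b)" for n
  have step: "D (Suc n) \<le> D n" for n
    unfolding D_def using nonexp[OF mk adm_iter[OF ad ab, of n]] by simp
  have "decseq D" using step by (simp add: decseq_SucI)
  then obtain L where L: "D \<longlonglongrightarrow> L" "\<forall>i. L \<le> D i"
    using decseq_convergent[of D 0] by (auto simp: D_def)
  have "L \<ge> 0" by (rule LIMSEQ_le_const[OF L(1)]) (auto simp: D_def)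
  have "L = 0"
  proof (rule ccontr)
    assume "L \<noteq> 0"
    hence "L > 0" using \<open>L \<ge> 0\<close> by simp
    then obtain \<delta> where "\<delta> > 0" and H: "\<forall>x y. L \<le> dist x y \<and> dist x y < L + \<delta> \<longrightarrow> \<alpha> x y * dist (T x) (T y) < L"
      using mk unfolding alpha_MK_contractive_def by blast
    from L(1) \<open>\<delta>>0\<close> obtain n where "dist (D n) L < \<delta>"
      unfolding LIMSEQ_def by blast
    hence "D n < L + \<delta>" by (simp add: dist_real_def)
    hence "\<alpha> ((T^^n) a) ((T^^n) b) * dist (T ((T^^n) a)) (T ((T^^n) b)) < L"
      using H L(2) unfolding D_def by auto
    hence "D (Suc n) < L" using mk_lt[OF adm_iter[OF ad ab, of n]] zero_le_dist unfolding D_def by simp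
    thus False using L(2) by (meson not_le)
  qed
  thus ?thesis using L(1) by (simp add: D_def[abs_def])
qed

lemma dist_chain:
  fixes g :: "nat \<Rightarrow> 'a::metric_space"
  shows "dist (g 0) (g k) \<le> (\<Sum>i<k. dist (g i) (g (Suc i)))"
proof (induction k)
  case 0 thus ?case by simp
next
  case (Suc k)
  have "dist (g 0) (g (Suc k)) \<le> dist (g 0) (g k) + dist (g k) (g (Suc k))"
    by (rule dist_triangle)
  thus ?case using Suc by simp
qed

theorem theorem4:
  fixes T :: "'a::complete_space \<Rightarrow> 'a"
    and \<alpha> :: "'a \<Rightarrow> 'a \<Rightarrow> real"
    and N :: nat
  assumes "N \<noteq> 0"
    and "\<forall>x y. \<alpha> x y \<ge> 0"
    and "N_transitive N \<alpha>"
    and "alpha_MK_contractive \<alpha> T"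
    and "alpha_admissible \<alpha> T"
    and "\<exists>x0. \<alpha> x0 (T x0) \<ge> 1"
    and "alpha_orbitally_continuous T \<alpha> \<or> Talpha_regular T \<alpha>"
    and "alpha_connected \<alpha>"
  shows "\<exists>xs. T xs = xs \<and> (\<forall>y. T y = y \<longrightarrow> y = xs) \<and> (\<forall>x. (\<lambda>n. (T ^^ n) x) \<longlonglongrightarrow> xs)"
proof -
  note mk = assms(4) and ad = assms(5)
  obtain x0 where x0: "\<alpha> x0 (T x0) \<ge> 1" using assms(6) by blast
  define x where "x n = (T^^n) x0" for n
  have xS: "T (x n) = x (Suc n)" for n unfolding x_def by simp
  have orb: "\<alpha> (x n) (x (Suc n)) \<ge> 1" for n
    using adm_iter[OF ad x0, of n] unfolding x_def by (simp add: funpow_swap1)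
  have orbital: "orbital T \<alpha> x" unfolding orbital_def using orb by (simp add: x_def)
  have d0: "(\<lambda>n. dist (x n) (x (Suc n))) \<longlonglongrightarrow> 0"
    using dist_iter_zero[OF mk ad x0] unfolding x_def by (simp add: funpow_swap1)
  have trans: "\<alpha> (x p) (x (p + j*N + 1)) \<ge> 1" for p j
  proof (induction j)
    case 0 thus ?case using orb[of p] by simp
  next
    case (Suc j)
    define w where "w i = (if i = 0 then x p else x (p + j*N + i))" for i
    have "\<forall>i\<le>N. \<alpha> (w i) (w (Suc i)) \<ge> 1"
      using Suc orb unfolding w_def by (auto simp: add.assoc)
    hence "\<alpha> (w 0) (w (Suc N)) \<ge> 1" using assms(3) unfolding N_transitive_def by blast
    thus ?case unfolding w_def by (simp add: algebra_simps)
  qed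
  have Npos: "N > 0" using assms(1) by simp
  have cauchy: "Cauchy x"
    unfolding Cauchy_def
  proof (intro allI impI)
    fix e :: real assume "e > 0"
    define \<epsilon> where "\<epsilon> = e / 4"
    have "\<epsilon> > 0" using \<open>e>0\<close> by (simp add: \<epsilon>_def)
    then obtain \<delta> where "\<delta> > 0" and H: "\<forall>a b. \<epsilon> \<le> dist a b \<and> dist a b < \<epsilon> + \<delta> \<longrightarrow> \<alpha> a b * dist (T a) (T b) < \<epsilon>"
      using mk unfolding alpha_MK_contractive_def by blast
    define \<delta>' where "\<delta>' = min \<delta> \<epsilon>"
    define \<eta> where "\<eta> = \<delta>' / (2 * real N)"
    have "\<delta>' > 0" using \<open>\<delta>>0\<close> \<open>\<epsilon>>0\<close> by (simp add: \<delta>'_def)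
    have "\<eta> > 0" using \<open>\<delta>'>0\<close> Npos by (simp add: \<eta>_def)
    have Neta: "real N * \<eta> = \<delta>' / 2" using Npos by (simp add: \<eta>_def)
    obtain M where M: "\<forall>n\<ge>M. dist (x n) (x (Suc n)) < \<eta>"
      using d0 \<open>\<eta>>0\<close> unfolding LIMSEQ_def by (auto simp: dist_real_def)
    have small: "dist (x a) (x (a + r)) \<le> real r * \<eta>" if "a \<ge> M" for a r
    proof (induction r)
      case 0 thus ?case by simp
    next
      case (Suc r)
      have "dist (x a) (x (a + Suc r)) \<le> dist (x a) (x (a + r)) + dist (x (a+r)) (x (Suc (a + r)))"
        using dist_triangle by simp
      also have "\<dots> \<le> real r * \<eta> + \<eta>" using Suc M that
        by (smt (verit) le_add1 le_trans)
      finally show ?case by (simp add: algebra_simps)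
    qed
    have P: "dist (x M) (x (M + j*N + 1)) < \<epsilon> + \<delta>'/2" for j
    proof (induction j)
      case 0
      have "dist (x M) (x (M + 1)) < \<eta>" using M by simp
      moreover have "\<eta> \<le> \<delta>'/2" unfolding \<eta>_def using Npos \<open>\<delta>'>0\<close>
        by (intro divide_left_mono) auto
      ultimately show ?case using \<open>\<epsilon>>0\<close> by simp
    next
      case (Suc j)
      let ?b = "x (M + j*N + 1)"
      have amid: "dist (x (Suc M)) (x (M + j*N + 2)) < \<epsilon>"
      proof (cases "\<epsilon> \<le> dist (x M) ?b")
        case True
        have "dist (x M) ?b < \<epsilon> + \<delta>" using Suc \<open>\<delta>'>0\<close> unfolding \<delta>'_def by linarith
        hence "\<alpha> (x M) ?b * dist (T (x M)) (T ?b) < \<epsilon>" using H True by blast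
        hence "dist (T (x M)) (T ?b) < \<epsilon>" using mk_lt[OF trans[of M j]] zero_le_dist by blast
        thus ?thesis by (simp add: xS)
      next
        case False
        have "dist (T (x M)) (T ?b) \<le> dist (x M) ?b" using nonexp[OF mk trans[of M j]] .
        thus ?thesis using False by (simp add: xS)
      qed
      have a1: "dist (x M) (x (Suc M)) < \<eta>" using M by simp
      have idx: "M + j*N + 2 + (N - 1) = M + Suc j * N + 1" using Npos by simp
      have a3: "dist (x (M + j*N + 2)) (x (M + Suc j * N + 1)) \<le> real (N - 1) * \<eta>"
        unfolding idx[symmetric] by (rule small) simp
      have "dist (x M) (x (M + Suc j * N + 1)) \<le> dist (x M) (x (Suc M)) + dist (x (Suc M)) (x (M + j*N + 2))
           + dist (x (M + j*N + 2)) (x (M + Suc j * N + 1))"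
        using dist_triangle[of "x M" "x (M + Suc j*N+1)" "x (Suc M)"]
          dist_triangle[of "x (Suc M)" "x (M + Suc j * N + 1)" "x (M + j*N + 2)"] by linarith
      also have "\<dots> < \<eta> + \<epsilon> + real (N - 1) * \<eta>" using a1 amid a3 by linarith
      also have "\<eta> + real (N - 1) * \<eta> = real N * \<eta>" using Npos
        by (simp add: of_nat_diff algebra_simps)
      hence "\<eta> + \<epsilon> + real (N - 1) * \<eta> = \<epsilon> + \<delta>'/2" using Neta by simp
      finally show ?case .
    qed
    have all: "dist (x M) (x n) < 2 * \<epsilon>" if "n \<ge> M" for n
    proof (cases "n = M")
      case True thus ?thesis using \<open>\<epsilon>>0\<close> by simp
    next
      case False
      define k where "k = n - M - 1"
      define j where "j = k div N"
      define r where "r = k mod N"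
      have "r < N" using Npos by (simp add: r_def)
      have kk: "k = j*N + r" unfolding j_def r_def by simp
      have "n = M + k + 1" using that False unfolding k_def by simp
      hence n_eq: "n = M + j*N + 1 + r" using kk by simp
      have "dist (x M) (x n) \<le> dist (x M) (x (M + j*N + 1)) + dist (x (M + j*N + 1)) (x (M + j*N + 1 + r))"
        using n_eq dist_triangle by simp
      also have "\<dots> < \<epsilon> + \<delta>'/2 + real r * \<eta>" using P[of j] small[of "M + j*N + 1" r] by simp
      also have "real r * \<eta> \<le> real N * \<eta>" using \<open>r < N\<close> \<open>\<eta>>0\<close> by simp
      hence "\<epsilon> + \<delta>'/2 + real r * \<eta> \<le> \<epsilon> + \<delta>'" using Neta by simp
      also have "\<dots> \<le> 2 * \<epsilon>" by (simp add: \<delta>'_def)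
      finally show ?thesis .
    qed
    show "\<exists>M. \<forall>m\<ge>M. \<forall>n\<ge>M. dist (x m) (x n) < e"
    proof (intro exI allI impI)
      fix m n assume "m \<ge> M" "n \<ge> M"
      have "dist (x m) (x n) \<le> dist (x M) (x m) + dist (x M) (x n)" by (rule dist_triangle3)
      also have "\<dots> < 2*\<epsilon> + 2*\<epsilon>" using all[of m] all[of n] \<open>m\<ge>M\<close> \<open>n\<ge>M\<close> by linarith
      finally show "dist (x m) (x n) < e" by (simp add: \<epsilon>_def)
    qed
  qed
  then obtain z where z: "x \<longlonglongrightarrow> z" using Cauchy_convergent_iff convergent_def by blast
  have zS: "(\<lambda>n. x (Suc n)) \<longlonglongrightarrow> z" using LIMSEQ_Suc[OF z] .
  have fixz: "T z = z"
    using assms(7)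
  proof
    assume "alpha_orbitally_continuous T \<alpha>"
    then obtain r :: "nat \<Rightarrow> nat" where r: "strict_mono r" "(\<lambda>k. T (x (r k))) \<longlonglongrightarrow> T z"
      using orbital z unfolding alpha_orbitally_continuous_def by blast
    have A: "(\<lambda>k. x (Suc (r k))) \<longlonglongrightarrow> z" using LIMSEQ_subseq_LIMSEQ[OF zS r(1)] by (simp add: o_def)
    have "(\<lambda>k. T (x (r k))) = (\<lambda>k. x (Suc (r k)))" by (simp add: xS)
    hence B: "(\<lambda>k. x (Suc (r k))) \<longlonglongrightarrow> T z" using r(2) by simp
    show ?thesis using LIMSEQ_unique[OF B A] .
  next
    assume "Talpha_regular T \<alpha>"
    then obtain r :: "nat \<Rightarrow> nat" where r: "strict_mono r" "\<forall>k. \<alpha> (x (r k)) z \<ge> 1"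
      using orbital z unfolding Talpha_regular_def by blast
    have rz: "(\<lambda>k. x (r k)) \<longlonglongrightarrow> z" using LIMSEQ_subseq_LIMSEQ[OF z r(1)] by (simp add: o_def)
    have "(\<lambda>k. dist (x (Suc (r k))) (T z)) \<longlonglongrightarrow> 0"
    proof (rule Lim_null_comparison)
      have "norm (dist (x (Suc (r k))) (T z)) \<le> dist (x (r k)) z" for k
        using nonexp[OF mk r(2)[rule_format, of k]] unfolding xS by simp
      thus "\<forall>\<^sub>F k in sequentially. norm (dist (x (Suc (r k))) (T z)) \<le> dist (x (r k)) z"
        by (rule always_eventually[OF allI])
      show "(\<lambda>k. dist (x (r k)) z) \<longlonglongrightarrow> 0" using tendsto_dist_iff[THEN iffD1, OF rz] .
    qed
    hence "(\<lambda>k. x (Suc (r k))) \<longlonglongrightarrow> T z" by (rule tendsto_dist_iff[THEN iffD2])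
    moreover have "(\<lambda>k. x (Suc (r k))) \<longlonglongrightarrow> z" using LIMSEQ_subseq_LIMSEQ[OF zS r(1)] by (simp add: o_def)
    ultimately show ?thesis by (rule LIMSEQ_unique)
  qed
  have zfix: "(T^^n) z = z" for n using fixz by (induction n) auto
  have conv: "(\<lambda>n. (T ^^ n) y) \<longlonglongrightarrow> z" for y
  proof (cases "y = z")
    case True thus ?thesis using zfix by simp
  next
    case False
    then obtain zs where zs: "alpha_chain \<alpha> y z zs"
      using assms(8) unfolding alpha_connected_def by blast
    define k where "k = length zs - 1"
    have ne: "zs \<noteq> []" and hd: "hd zs = y" and lst: "last zs = z"
      using zs unfolding alpha_chain_def by auto
    have y0: "zs ! 0 = y" using ne hd by (simp add: hd_conv_nth)
    have zk: "zs ! k = z" using ne lst by (simp add: k_def last_conv_nth)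
    have link: "(\<lambda>n. dist ((T^^n) (zs ! i)) ((T^^n) (zs ! Suc i))) \<longlonglongrightarrow> 0" if "i < k" for i
    proof -
      have "1 \<le> Suc i \<and> Suc i < length zs" using that by (simp add: k_def)
      hence "\<alpha> (zs ! i) (zs ! Suc i) \<ge> 1 \<or> \<alpha> (zs ! Suc i) (zs ! i) \<ge> 1"
        using zs unfolding alpha_chain_def by (smt (verit) diff_Suc_1)
      thus ?thesis
      proof
        assume h: "\<alpha> (zs ! i) (zs ! Suc i) \<ge> 1"
        show ?thesis using dist_iter_zero[OF mk ad h] .
      next
        assume h: "\<alpha> (zs ! Suc i) (zs ! i) \<ge> 1"
        show ?thesis using dist_iter_zero[OF mk ad h] by (simp add: dist_commute)
      qed
    qed
    have bnd: "dist ((T^^n) y) z \<le> (\<Sum>i<k. dist ((T^^n) (zs ! i)) ((T^^n) (zs ! Suc i)))" for n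
      using dist_chain[of "\<lambda>i. (T^^n) (zs ! i)" k] y0 zk zfix[of n] by simp
    have "(\<lambda>n. dist ((T^^n) y) z) \<longlonglongrightarrow> 0"
    proof (rule Lim_null_comparison)
      show "\<forall>\<^sub>F n in sequentially. norm (dist ((T^^n) y) z) \<le> (\<Sum>i<k. dist ((T^^n) (zs ! i)) ((T^^n) (zs ! Suc i)))"
        using bnd by (intro always_eventually allI) simp
      show "(\<lambda>n. \<Sum>i<k. dist ((T^^n) (zs ! i)) ((T^^n) (zs ! Suc i))) \<longlonglongrightarrow> 0"
        by (rule tendsto_null_sum) (use link in auto)
    qed
    thus ?thesis by (rule tendsto_dist_iff[THEN iffD2])
  qed
  have uniq: "y = z" if "T y = y" for y
  proof -
    have "(T^^n) y = y" for n using that by (induction n) auto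
    hence "(\<lambda>n. y) \<longlonglongrightarrow> z" using conv[of y] by simp
    thus ?thesis using LIMSEQ_unique tendsto_const by blast
  qed
  show ?thesis using fixz uniq conv by blast
qed

end
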